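(* Let $\mathbb{K}$ be a number field of degree $k$, $\mathcal{O}$ an order in $\mathbb{K}$ with $\mathbb{Z}$-basis $\omega_1=1,\ldots,\omega_k$, $p\in\mathcal{O}[x]$ monic, and $\mathcal{F}$ a bounded fundamental domain for the action of $\mathbb{Z}^k$ on $\mathbb{R}^k$ with $\mathbf{0}\in\mathrm{int}(\mathcal{F})$. Then there is $\eta>0$ such that, for each choice of sign, $(p(x)\pm\alpha,D_{\mathcal{F},p(0)\pm\alpha})$ has the finiteness property whenever $\alpha=m_1\omega_1+\cdots+m_k\omega_k\in\mathcal{O}$ ($m_j\in\mathbb{Z}$) satisfies $\max\{1,|m_2|,\ldots,|m_k|\}<\eta|m_1|$.
   Context: A bounded fundamental domain for the action of $\mathbb{Z}^k$ on $\mathbb{R}^k$ is a bounded set $\mathcal{F}$ with $\mathbb{R}^k=\mathcal{F}+\mathbb{Z}^k$ and translates pairwise disjoint. For $\vartheta\in\mathcal{O}$, $D_{\mathcal{F},\vartheta}=\{\vartheta\sum_j f_j\omega_j:(f_1,\ldots,f_k)\in\mathcal{F}\}\cap\mathcal{O}$. A pair $(q,\mathcal{D})$ ($q$ monic in $\mathcal{O}[x]$, $\mathcal{D}$ complete residue system modulo $q(0)$ containing $0$) has the finiteness property if every $a\in\mathcal{O}[x]$ satisfies $a\equiv\sum_{j=0}^{\ell-1}d_jx^j\pmod q$ for some $\ell\in\mathbb{N}$, $d_j\in\mathcal{D}$. $\mathrm{int}$ denotes the interior in $\mathbb{R}^k$. *)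

theory Defs
  imports "HOL-Analysis.Analysis" "HOL-Computational_Algebra.Polynomial"
begin

text \<open>The order O is modelled inside the complex numbers (every number field embeds
  into the complex numbers): it is the set of integer combinations of a family
  omega indexed by a finite type 'n, with k = CARD('n).\<close>

definition order_of :: "('n::finite \<Rightarrow> complex) \<Rightarrow> complex set" where
  "order_of \<omega> = range (\<lambda>c::'n \<Rightarrow> int. \<Sum>j\<in>UNIV. of_int (c j) * \<omega> j)"

text \<open>omega is a Z-basis of an order: Z-linearly independent and the Z-span is closed
  under multiplication (together with omega i0 = 1 this makes the span a subring of the
  complex numbers which is a free Z-module of rank k and a domain, i.e. an order in the
  number field Q(omega) of degree k).\<close>

definition is_order_basis :: "('n::finite \<Rightarrow> complex) \<Rightarrow> bool" where
  "is_order_basis \<omega> \<longleftrightarrow>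
     (\<forall>c::'n \<Rightarrow> int. (\<Sum>j\<in>UNIV. of_int (c j) * \<omega> j) = 0 \<longrightarrow> (\<forall>j. c j = 0)) \<and>
     (\<forall>i j. \<omega> i * \<omega> j \<in> order_of \<omega>)"

definition ocoord :: "('n::finite \<Rightarrow> complex) \<Rightarrow> complex \<Rightarrow> 'n \<Rightarrow> int" where
  "ocoord \<omega> \<beta> = (THE c. \<beta> = (\<Sum>j\<in>UNIV. of_int (c j) * \<omega> j))"

text \<open>Multiplication by theta on K tensor R, identified with R^k via the basis omega:
  f corresponds to sum f_j omega_j, and theta * that has coordinates given below.\<close>

definition mulmap :: "('n::finite \<Rightarrow> complex) \<Rightarrow> complex \<Rightarrow> real^'n \<Rightarrow> real^'n" where
  "mulmap \<omega> \<theta> f = (\<chi> i. \<Sum>j\<in>UNIV. f $ j * of_int (ocoord \<omega> (\<theta> * \<omega> j) i))"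

definition Zvecs :: "(real^'n::finite) set" where
  "Zvecs = {z. \<forall>i. z $ i \<in> \<int>}"

definition fundamental_domain :: "(real^'n::finite) set \<Rightarrow> bool" where
  "fundamental_domain F \<longleftrightarrow>
     (\<forall>x. \<exists>f\<in>F. \<exists>z\<in>Zvecs. x = f + z) \<and>
     (\<forall>z1\<in>Zvecs. \<forall>z2\<in>Zvecs. z1 \<noteq> z2 \<longrightarrow> ((\<lambda>f. f + z1) ` F) \<inter> ((\<lambda>f. f + z2) ` F) = {})"

text \<open>D_{F,theta} = { theta * sum f_j omega_j : f in F } intersected with O.\<close>

definition digit_set :: "('n::finite \<Rightarrow> complex) \<Rightarrow> (real^'n) set \<Rightarrow> complex \<Rightarrow> complex set" where
  "digit_set \<omega> F \<theta> =
     {\<beta> \<in> order_of \<omega>. \<exists>f\<in>F. mulmap \<omega> \<theta> f = (\<chi> i. real_of_int (ocoord \<omega> \<beta> i))}"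

definition poly_over :: "complex set \<Rightarrow> complex poly \<Rightarrow> bool" where
  "poly_over R a \<longleftrightarrow> (\<forall>i. coeff a i \<in> R)"

definition pcong_over :: "complex set \<Rightarrow> complex poly \<Rightarrow> complex poly \<Rightarrow> complex poly \<Rightarrow> bool" where
  "pcong_over R q a b \<longleftrightarrow> (\<exists>c. poly_over R c \<and> a - b = q * c)"

definition complete_residue_system :: "complex set \<Rightarrow> complex \<Rightarrow> complex set \<Rightarrow> bool" where
  "complete_residue_system R \<theta> D \<longleftrightarrow> D \<subseteq> R \<and>
     (\<forall>\<beta>\<in>R. \<exists>!d. d \<in> D \<and> (\<exists>\<gamma>\<in>R. \<beta> - d = \<theta> * \<gamma>))"

definition finiteness_property :: "('n::finite \<Rightarrow> complex) \<Rightarrow> complex poly \<Rightarrow> complex set \<Rightarrow> bool" where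
  "finiteness_property \<omega> q D \<longleftrightarrow>
     lead_coeff q = 1 \<and> poly_over (order_of \<omega>) q \<and>
     complete_residue_system (order_of \<omega>) (poly q 0) D \<and> 0 \<in> D \<and>
     (\<forall>a. poly_over (order_of \<omega>) a \<longrightarrow>
        (\<exists>(l::nat) d. (\<forall>j<l. d j \<in> D) \<and>
           pcong_over (order_of \<omega>) q a (\<Sum>j<l. monom (d j) j)))"

end

theory Submission
  imports Defs
begin


locale OB =
  fixes \<omega> :: "'n::finite \<Rightarrow> complex" and i0 :: 'n
  assumes basis: "is_order_basis \<omega>" and one: "\<omega> i0 = 1"
begin

abbreviation "Ord \<equiv> order_of \<omega>"

definition cv :: "complex \<Rightarrow> real^'n" where
  "cv \<beta> = (\<chi> i. real_of_int (ocoord \<omega> \<beta> i))"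

lemma lc_eq:
  assumes "(\<Sum>j\<in>UNIV. of_int (c j) * \<omega> j) = (\<Sum>j\<in>UNIV. of_int (c' j) * \<omega> j)"
  shows "c = c'"
proof -
  have "(\<Sum>j\<in>UNIV. of_int (c j - c' j) * \<omega> j) = 0"
    using assms by (simp add: algebra_simps sum_subtractf)
  moreover from basis have H: "\<forall>c::'n\<Rightarrow>int. (\<Sum>j\<in>UNIV. of_int (c j) * \<omega> j) = 0 \<longrightarrow> (\<forall>j. c j = 0)"
    by (simp add: is_order_basis_def)
  ultimately have "\<forall>j. c j - c' j = 0" using H[rule_format, of "\<lambda>j. c j - c' j"] by blast
  then show ?thesis by auto
qed

lemma ocoord_lc: "ocoord \<omega> (\<Sum>j\<in>UNIV. of_int (c j) * \<omega> j) = c"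
  unfolding ocoord_def
  by (rule the_equality) (auto dest: lc_eq)

lemma O_repr: "\<beta> \<in> Ord \<Longrightarrow> \<beta> = (\<Sum>j\<in>UNIV. of_int (ocoord \<omega> \<beta> j) * \<omega> j)"
  unfolding order_of_def by (auto simp: ocoord_lc)

lemma O_I: "(\<Sum>j\<in>UNIV. of_int (c j) * \<omega> j) \<in> Ord"
  unfolding order_of_def by auto

lemma O_add: "\<beta> \<in> Ord \<Longrightarrow> \<gamma> \<in> Ord \<Longrightarrow> \<beta> + \<gamma> \<in> Ord"
proof -
  assume a: "\<beta> \<in> Ord" "\<gamma> \<in> Ord"
  have "\<beta> + \<gamma> = (\<Sum>j\<in>UNIV. of_int (ocoord \<omega> \<beta> j + ocoord \<omega> \<gamma> j) * \<omega> j)"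
    using O_repr[OF a(1)] O_repr[OF a(2)] by (simp add: algebra_simps sum.distrib)
  then show ?thesis using O_I by metis
qed

lemma O_intmult: "\<beta> \<in> Ord \<Longrightarrow> of_int c * \<beta> \<in> Ord"
proof -
  assume a: "\<beta> \<in> Ord"
  have "of_int c * \<beta> = (\<Sum>j\<in>UNIV. of_int (c * ocoord \<omega> \<beta> j) * \<omega> j)"
    by (subst O_repr[OF a]) (simp add: sum_distrib_left algebra_simps)
  then show ?thesis using O_I by metis
qed

lemma O_zero: "0 \<in> Ord"
  using O_I[of "\<lambda>_. 0"] by simp

lemma O_uminus: "\<beta> \<in> Ord \<Longrightarrow> - \<beta> \<in> Ord"
  using O_intmult[of \<beta> "-1"] by simp

lemma O_diff: "\<beta> \<in> Ord \<Longrightarrow> \<gamma> \<in> Ord \<Longrightarrow> \<beta> - \<gamma> \<in> Ord"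
  using O_add O_uminus by (metis diff_conv_add_uminus)

lemma O_sum: "finite S \<Longrightarrow> (\<And>i. i \<in> S \<Longrightarrow> u i \<in> Ord) \<Longrightarrow> (\<Sum>i\<in>S. u i) \<in> Ord"
  by (induction S rule: finite_induct) (auto intro: O_add O_zero)

lemma O_omega: "\<omega> j \<in> Ord"
proof -
  have "(\<Sum>i\<in>UNIV. of_int (if i = j then 1 else 0) * \<omega> i) = (\<Sum>i\<in>UNIV. if i = j then \<omega> i else 0)"
    by (rule sum.cong) auto
  then have "\<omega> j = (\<Sum>i\<in>UNIV. of_int (if i = j then 1 else 0) * \<omega> i)"
    by simp
  then show ?thesis using O_I by metis
qed

lemma O_omega_mult: "\<omega> i * \<omega> j \<in> Ord"
  using basis unfolding is_order_basis_def by blast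

lemma O_mult: "\<beta> \<in> Ord \<Longrightarrow> \<gamma> \<in> Ord \<Longrightarrow> \<beta> * \<gamma> \<in> Ord"
proof -
  assume a: "\<beta> \<in> Ord" "\<gamma> \<in> Ord"
  have "\<beta> * \<gamma> = (\<Sum>i\<in>UNIV. \<Sum>j\<in>UNIV. of_int (ocoord \<omega> \<beta> i) * (of_int (ocoord \<omega> \<gamma> j) * (\<omega> i * \<omega> j)))"
    apply (subst O_repr[OF a(1)], subst O_repr[OF a(2)])
    apply (simp add: sum_distrib_left sum_distrib_right algebra_simps)
    apply (subst sum.swap)
    apply (simp add: algebra_simps)
    done
  also have "\<dots> \<in> Ord"
    by (intro O_sum O_intmult O_omega_mult) auto
  finally show ?thesis .
qed

lemma O_one: "1 \<in> Ord" using O_omega[of i0] one by simp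

lemma O_of_int: "of_int c \<in> Ord" using O_intmult[OF O_one, of c] by simp

lemma ocoord_lin:
  assumes "finite S" "\<And>i. i \<in> S \<Longrightarrow> u i \<in> Ord"
  shows "ocoord \<omega> (\<Sum>i\<in>S. of_int (b i) * u i) = (\<lambda>j. \<Sum>i\<in>S. b i * ocoord \<omega> (u i) j)"
proof -
  have "(\<Sum>i\<in>S. of_int (b i) * u i) = (\<Sum>i\<in>S. of_int (b i) * (\<Sum>j\<in>UNIV. of_int (ocoord \<omega> (u i) j) * \<omega> j))"
    using O_repr assms(2) by (intro sum.cong) auto
  also have "\<dots> = (\<Sum>j\<in>UNIV. of_int (\<Sum>i\<in>S. b i * ocoord \<omega> (u i) j) * \<omega> j)"
    by (simp add: sum_distrib_left sum_distrib_right algebra_simps sum.swap[of _ S])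
  finally have F: "(\<Sum>i\<in>S. of_int (b i) * u i) = (\<Sum>j\<in>UNIV. of_int (\<Sum>i\<in>S. b i * ocoord \<omega> (u i) j) * \<omega> j)" .
  show ?thesis by (subst F, rule ocoord_lc)
qed

lemma ocoord_add: "\<beta> \<in> Ord \<Longrightarrow> \<gamma> \<in> Ord \<Longrightarrow> ocoord \<omega> (\<beta> + \<gamma>) = (\<lambda>j. ocoord \<omega> \<beta> j + ocoord \<omega> \<gamma> j)"
proof -
  assume a: "\<beta> \<in> Ord" "\<gamma> \<in> Ord"
  have "\<beta> + \<gamma> = (\<Sum>j\<in>UNIV. of_int (ocoord \<omega> \<beta> j + ocoord \<omega> \<gamma> j) * \<omega> j)"
    using O_repr[OF a(1)] O_repr[OF a(2)] by (simp add: algebra_simps sum.distrib)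
  then show ?thesis by (simp only: ocoord_lc)
qed

lemma cv_add: "\<beta> \<in> Ord \<Longrightarrow> \<gamma> \<in> Ord \<Longrightarrow> cv (\<beta> + \<gamma>) = cv \<beta> + cv \<gamma>"
  by (simp add: cv_def ocoord_add vec_eq_iff)

lemma cv_diff: "\<beta> \<in> Ord \<Longrightarrow> \<gamma> \<in> Ord \<Longrightarrow> cv (\<beta> - \<gamma>) = cv \<beta> - cv \<gamma>"
proof -
  assume a: "\<beta> \<in> Ord" "\<gamma> \<in> Ord"
  have "cv \<beta> = cv ((\<beta> - \<gamma>) + \<gamma>)" by simp
  also have "\<dots> = cv (\<beta> - \<gamma>) + cv \<gamma>" using a by (intro cv_add O_diff) auto
  finally show ?thesis by simp
qed

lemma cv_lc: "cv (\<Sum>j\<in>UNIV. of_int (c j) * \<omega> j) = (\<chi> i. real_of_int (c i))"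
  by (simp add: cv_def ocoord_lc)

lemma cv_zero: "cv 0 = 0"
  using cv_lc[of "\<lambda>_. 0"] by (simp add: vec_eq_iff)

lemma cv_inj: "\<beta> \<in> Ord \<Longrightarrow> \<gamma> \<in> Ord \<Longrightarrow> cv \<beta> = cv \<gamma> \<Longrightarrow> \<beta> = \<gamma>"
proof -
  assume a: "\<beta> \<in> Ord" "\<gamma> \<in> Ord" "cv \<beta> = cv \<gamma>"
  then have "ocoord \<omega> \<beta> = ocoord \<omega> \<gamma>" by (auto simp: cv_def vec_eq_iff)
  then show ?thesis using O_repr a by metis
qed

lemma cv_omega: "cv (\<omega> j) = axis j 1"
proof -
  have "(\<Sum>i\<in>UNIV. of_int (if i = j then 1 else 0) * \<omega> i) = (\<Sum>i\<in>UNIV. if i = j then \<omega> i else 0)"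
    by (rule sum.cong) auto
  then have "\<omega> j = (\<Sum>i\<in>UNIV. of_int (if i = j then 1 else 0) * \<omega> i)"
    by simp
  then have "cv (\<omega> j) = (\<chi> i. real_of_int (if i = j then 1 else 0))" using cv_lc by metis
  then show ?thesis by (simp add: axis_def vec_eq_iff)
qed

lemma axis_expand: "(\<Sum>j\<in>UNIV. (x $ j) *\<^sub>R axis j (1::real)) = x"
  by (simp add: vec_eq_iff sum_component axis_def if_distrib cong: if_cong)

lemma cv_mult: "\<beta> \<in> Ord \<Longrightarrow> \<gamma> \<in> Ord \<Longrightarrow> cv (\<beta> * \<gamma>) = mulmap \<omega> \<beta> (cv \<gamma>)"
proof -
  assume a: "\<beta> \<in> Ord" "\<gamma> \<in> Ord"
  have "\<beta> * \<gamma> = (\<Sum>j\<in>UNIV. of_int (ocoord \<omega> \<gamma> j) * (\<beta> * \<omega> j))"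
    by (subst O_repr[OF a(2)]) (simp add: sum_distrib_left algebra_simps)
  then have "ocoord \<omega> (\<beta> * \<gamma>) = (\<lambda>k. \<Sum>j\<in>UNIV. ocoord \<omega> \<gamma> j * ocoord \<omega> (\<beta> * \<omega> j) k)"
    using ocoord_lin[of UNIV "\<lambda>j. \<beta> * \<omega> j"] O_mult[OF a(1) O_omega] by simp
  then show ?thesis by (simp add: cv_def mulmap_def vec_eq_iff)
qed

lemma mulmap_expand:
  assumes "\<beta> \<in> Ord"
  shows "mulmap \<omega> \<beta> x = (\<Sum>i\<in>UNIV. \<Sum>j\<in>UNIV. (real_of_int (ocoord \<omega> \<beta> i) * x $ j) *\<^sub>R cv (\<omega> i * \<omega> j))"
proof -
  have e: "ocoord \<omega> (\<beta> * \<omega> j) = (\<lambda>k. \<Sum>i\<in>UNIV. ocoord \<omega> \<beta> i * ocoord \<omega> (\<omega> i * \<omega> j) k)" for j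
  proof -
    have r: "(\<Sum>i\<in>UNIV. of_int (ocoord \<omega> \<beta> i) * \<omega> i) = \<beta>" using O_repr[OF assms] by simp
    have "\<beta> * \<omega> j = (\<Sum>i\<in>UNIV. of_int (ocoord \<omega> \<beta> i) * \<omega> i) * \<omega> j"
      by (simp only: r)
    also have "\<dots> = (\<Sum>i\<in>UNIV. of_int (ocoord \<omega> \<beta> i) * (\<omega> i * \<omega> j))"
      by (simp only: sum_distrib_right mult.assoc)
    finally have "\<beta> * \<omega> j = (\<Sum>i\<in>UNIV. of_int (ocoord \<omega> \<beta> i) * (\<omega> i * \<omega> j))" .
    then show ?thesis
      by (simp only:) (rule ocoord_lin, auto intro: O_omega_mult)
  qed
  show ?thesis
  proof (subst vec_eq_iff, intro allI)
    fix k
    have "mulmap \<omega> \<beta> x $ k = (\<Sum>j\<in>UNIV. x $ j * real_of_int (\<Sum>i\<in>UNIV. ocoord \<omega> \<beta> i * ocoord \<omega> (\<omega> i * \<omega> j) k))"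
      by (simp only: mulmap_def e vec_lambda_beta)
    also have "\<dots> = (\<Sum>j\<in>UNIV. \<Sum>i\<in>UNIV. (real_of_int (ocoord \<omega> \<beta> i) * x $ j) * real_of_int (ocoord \<omega> (\<omega> i * \<omega> j) k))"
      by (simp add: sum_distrib_left mult_ac)
    also have "\<dots> = (\<Sum>i\<in>UNIV. \<Sum>j\<in>UNIV. (real_of_int (ocoord \<omega> \<beta> i) * x $ j) * real_of_int (ocoord \<omega> (\<omega> i * \<omega> j) k))"
      by (rule sum.swap)
    also have "\<dots> = (\<Sum>i\<in>UNIV. \<Sum>j\<in>UNIV. (real_of_int (ocoord \<omega> \<beta> i) * x $ j) *\<^sub>R cv (\<omega> i * \<omega> j)) $ k"
      by (simp add: sum_component cv_def)
    finally show "mulmap \<omega> \<beta> x $ k = \<dots>" .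
  qed
qed

lemma mulmap_linear: "linear (mulmap \<omega> \<theta>)"
  by (rule linearI) (simp_all add: mulmap_def vec_eq_iff sum.distrib algebra_simps sum_distrib_left)

definition "Kmul = (\<Sum>i\<in>UNIV. \<Sum>j\<in>UNIV. norm (cv (\<omega> i * \<omega> j)))"

lemma Kmul_nonneg: "Kmul \<ge> 0"
  unfolding Kmul_def by (intro sum_nonneg) auto

lemma inner_le_Kmul: "(\<Sum>j\<in>UNIV. norm (cv (\<omega> i * \<omega> j))) \<le> Kmul"
  unfolding Kmul_def by (rule member_le_sum) (auto intro: sum_nonneg)

lemma norm_mulmap:
  assumes "\<beta> \<in> Ord"
  shows "norm (mulmap \<omega> \<beta> x) \<le> norm (cv \<beta>) * norm x * Kmul"
proof -
  have "norm (mulmap \<omega> \<beta> x) \<le> (\<Sum>i\<in>UNIV. \<Sum>j\<in>UNIV. norm ((real_of_int (ocoord \<omega> \<beta> i) * x $ j) *\<^sub>R cv (\<omega> i * \<omega> j)))"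
    unfolding mulmap_expand[OF assms]
    by (rule order_trans[OF norm_sum sum_mono]) (rule norm_sum)
  also have "\<dots> \<le> (\<Sum>i\<in>UNIV. \<Sum>j\<in>UNIV. (norm (cv \<beta>) * norm x) * norm (cv (\<omega> i * \<omega> j)))"
  proof (intro sum_mono)
    fix i j
    have "\<bar>real_of_int (ocoord \<omega> \<beta> i)\<bar> \<le> norm (cv \<beta>)"
      using component_le_norm_cart[of "cv \<beta>" i] by (simp add: cv_def)
    moreover have "\<bar>x $ j\<bar> \<le> norm x" by (rule component_le_norm_cart)
    ultimately have "\<bar>real_of_int (ocoord \<omega> \<beta> i) * x $ j\<bar> \<le> norm (cv \<beta>) * norm x"
      by (simp add: abs_mult mult_mono)
    then show "norm ((real_of_int (ocoord \<omega> \<beta> i) * x $ j) *\<^sub>R cv (\<omega> i * \<omega> j)) \<le> norm (cv \<beta>) * norm x * norm (cv (\<omega> i * \<omega> j))"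
      by (simp add: mult_right_mono)
  qed
  also have "\<dots> = norm (cv \<beta>) * norm x * Kmul"
    by (simp add: Kmul_def sum_distrib_left)
  finally show ?thesis .
qed

lemma norm_cv_mult: "\<beta> \<in> Ord \<Longrightarrow> \<gamma> \<in> Ord \<Longrightarrow> norm (cv (\<beta> * \<gamma>)) \<le> norm (cv \<beta>) * norm (cv \<gamma>) * Kmul"
  using cv_mult norm_mulmap by metis

lemma mulmap_lower:
  assumes "\<beta> \<in> Ord"
  shows "norm (mulmap \<omega> \<beta> x) \<ge> \<bar>real_of_int (ocoord \<omega> \<beta> i0)\<bar> * norm x
            - (\<Sum>i\<in>-{i0}. \<bar>real_of_int (ocoord \<omega> \<beta> i)\<bar>) * norm x * Kmul"
proof -
  let ?t = "\<lambda>i. (\<Sum>j\<in>UNIV. (real_of_int (ocoord \<omega> \<beta> i) * x $ j) *\<^sub>R cv (\<omega> i * \<omega> j))"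
  have split: "mulmap \<omega> \<beta> x = ?t i0 + (\<Sum>i\<in>-{i0}. ?t i)"
    unfolding mulmap_expand[OF assms]
    by (subst sum.remove[of UNIV i0]) (auto simp: Compl_eq_Diff_UNIV)
  have t0: "?t i0 = real_of_int (ocoord \<omega> \<beta> i0) *\<^sub>R x"
  proof -
    have "?t i0 = (\<Sum>j\<in>UNIV. (real_of_int (ocoord \<omega> \<beta> i0) * x $ j) *\<^sub>R axis j 1)"
      by (simp add: one cv_omega)
    also have "\<dots> = real_of_int (ocoord \<omega> \<beta> i0) *\<^sub>R (\<Sum>j\<in>UNIV. (x $ j) *\<^sub>R axis j 1)"
      by (simp only: scaleR_sum_right scaleR_scaleR)
    also have "\<dots> = real_of_int (ocoord \<omega> \<beta> i0) *\<^sub>R x"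
      by (simp only: axis_expand)
    finally show ?thesis .
  qed
  have bt: "norm (?t i) \<le> \<bar>real_of_int (ocoord \<omega> \<beta> i)\<bar> * norm x * Kmul" for i
  proof -
    have "norm (?t i) \<le> (\<Sum>j\<in>UNIV. norm ((real_of_int (ocoord \<omega> \<beta> i) * x $ j) *\<^sub>R cv (\<omega> i * \<omega> j)))"
      by (rule norm_sum)
    also have "\<dots> \<le> (\<Sum>j\<in>UNIV. (\<bar>real_of_int (ocoord \<omega> \<beta> i)\<bar> * norm x) * norm (cv (\<omega> i * \<omega> j)))"
    proof (intro sum_mono)
      fix j
      have "\<bar>real_of_int (ocoord \<omega> \<beta> i) * x $ j\<bar> \<le> \<bar>real_of_int (ocoord \<omega> \<beta> i)\<bar> * norm x"
        by (simp add: abs_mult mult_left_mono component_le_norm_cart)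
      then show "norm ((real_of_int (ocoord \<omega> \<beta> i) * x $ j) *\<^sub>R cv (\<omega> i * \<omega> j)) \<le> (\<bar>real_of_int (ocoord \<omega> \<beta> i)\<bar> * norm x) * norm (cv (\<omega> i * \<omega> j))"
        by (simp add: mult_right_mono)
    qed
    also have "\<dots> = (\<bar>real_of_int (ocoord \<omega> \<beta> i)\<bar> * norm x) * (\<Sum>j\<in>UNIV. norm (cv (\<omega> i * \<omega> j)))"
      by (simp add: sum_distrib_left)
    also have "\<dots> \<le> (\<bar>real_of_int (ocoord \<omega> \<beta> i)\<bar> * norm x) * Kmul"
      by (intro mult_left_mono inner_le_Kmul) auto
    finally show ?thesis by simp
  qed
  have "norm (\<Sum>i\<in>-{i0}. ?t i) \<le> (\<Sum>i\<in>-{i0}. \<bar>real_of_int (ocoord \<omega> \<beta> i)\<bar> * norm x * Kmul)"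
    by (rule order_trans[OF norm_sum sum_mono]) (rule bt)
  also have "\<dots> = (\<Sum>i\<in>-{i0}. \<bar>real_of_int (ocoord \<omega> \<beta> i)\<bar>) * norm x * Kmul"
    by (simp add: sum_distrib_right)
  finally have r: "norm (\<Sum>i\<in>-{i0}. ?t i) \<le> \<dots>" .
  have "norm (?t i0) \<le> norm (mulmap \<omega> \<beta> x) + norm (\<Sum>i\<in>-{i0}. ?t i)"
    using split norm_triangle_ineq4[of "mulmap \<omega> \<beta> x" "\<Sum>i\<in>-{i0}. ?t i"] by (simp add: algebra_simps)
  then show ?thesis using r t0 by simp
qed

end


context OB
begin

lemma cv_Zvec:
  assumes "z \<in> Zvecs"
  obtains \<gamma> where "\<gamma> \<in> Ord" "cv \<gamma> = z"
proof -
  define zi where "zi j = \<lfloor>z $ j\<rfloor>" for j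
  have "real_of_int (zi j) = z $ j" for j
    using assms unfolding Zvecs_def zi_def by (auto elim: Ints_cases)
  then have "cv (\<Sum>j\<in>UNIV. of_int (zi j) * \<omega> j) = z"
    by (simp add: cv_lc vec_eq_iff)
  then show ?thesis using that O_I by blast
qed

lemma cv_in_Zvecs: "cv \<beta> \<in> Zvecs"
  by (simp add: Zvecs_def cv_def)

context
  fixes F :: "(real^'n) set" and \<theta> :: complex and \<mu> r B :: real
  assumes th: "\<theta> \<in> Ord"
    and lb: "\<And>x. norm (mulmap \<omega> \<theta> x) \<ge> \<mu> * norm x"
    and mu: "\<mu> > 0"
    and fd: "fundamental_domain F"
    and FB: "\<forall>f\<in>F. norm f \<le> B"
    and Fr: "ball 0 r \<subseteq> F" and r: "r > 0"
begin

lemma inj_mm: "inj (mulmap \<omega> \<theta>)"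
proof (rule injI)
  fix x y assume "mulmap \<omega> \<theta> x = mulmap \<omega> \<theta> y"
  then have "mulmap \<omega> \<theta> (x - y) = 0"
    using linear_diff[OF mulmap_linear] by simp
  then have "\<mu> * norm (x - y) \<le> 0" using lb[of "x - y"] by simp
  then have "norm (x - y) = 0" using mu by (simp add: mult_le_0_iff)
  then show "x = y" by simp
qed

lemma surj_mm: "\<exists>x. mulmap \<omega> \<theta> x = y"
  using eucl.linear_injective_imp_surjective[OF mulmap_linear inj_mm] by (metis surjD)

lemma preimage_bound:
  assumes "mulmap \<omega> \<theta> x = y" shows "norm x \<le> norm y / \<mu>"
  using lb[of x] assms mu by (simp add: field_simps)

lemma division:
  assumes "\<beta> \<in> Ord"
  shows "\<exists>d \<gamma>. d \<in> digit_set \<omega> F \<theta> \<and> \<gamma> \<in> Ord \<and> \<beta> = d + \<theta> * \<gamma> \<and> norm (cv \<gamma>) \<le> norm (cv \<beta>) / \<mu> + B"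
proof -
  obtain x where x: "mulmap \<omega> \<theta> x = cv \<beta>" using surj_mm by blast
  obtain f z where fz: "f \<in> F" "z \<in> Zvecs" "x = f + z"
    using fd unfolding fundamental_domain_def by blast
  obtain \<gamma> where g: "\<gamma> \<in> Ord" "cv \<gamma> = z" using cv_Zvec[OF fz(2)] by blast
  define d where "d = \<beta> - \<theta> * \<gamma>"
  have dO: "d \<in> Ord" unfolding d_def using assms th g by (intro O_diff O_mult)
  have "cv d = cv \<beta> - mulmap \<omega> \<theta> z"
    unfolding d_def using assms th g by (simp add: cv_diff O_mult cv_mult)
  also have "\<dots> = mulmap \<omega> \<theta> x - mulmap \<omega> \<theta> z" using x by simp
  also have "\<dots> = mulmap \<omega> \<theta> f" using fz(3) linear_diff[OF mulmap_linear] by (metis add_diff_cancel)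
  finally have "d \<in> digit_set \<omega> F \<theta>"
    using dO fz(1) unfolding digit_set_def cv_def by auto
  moreover have "norm (cv \<gamma>) \<le> norm (cv \<beta>) / \<mu> + B"
  proof -
    have "norm z = norm (x - f)" using fz(3) by simp
    also have "\<dots> \<le> norm x + norm f" by (rule norm_triangle_ineq4)
    also have "\<dots> \<le> norm (cv \<beta>) / \<mu> + B" using preimage_bound[OF x] bspec[OF FB fz(1)] by simp
    finally show ?thesis using g by simp
  qed
  ultimately show ?thesis
    by (intro exI[of _ d] exI[of _ \<gamma>]) (use g in \<open>auto simp: d_def\<close>)
qed

lemma small_in_D:
  assumes "\<beta> \<in> Ord" "norm (cv \<beta>) < \<mu> * r"
  shows "\<beta> \<in> digit_set \<omega> F \<theta>"
proof -
  obtain x where x: "mulmap \<omega> \<theta> x = cv \<beta>" using surj_mm by blast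
  have "norm x \<le> norm (cv \<beta>) / \<mu>" by (rule preimage_bound[OF x])
  also have "\<dots> < r" using assms(2) mu by (simp add: field_simps)
  finally have "x \<in> F" using Fr by auto
  then show ?thesis using assms(1) x unfolding digit_set_def cv_def by auto
qed


lemma zero_in_D: "0 \<in> digit_set \<omega> F \<theta>"
  using small_in_D[OF O_zero] mu r by (simp add: cv_zero)

lemma crs: "complete_residue_system Ord \<theta> (digit_set \<omega> F \<theta>)"
  unfolding complete_residue_system_def
proof (intro conjI ballI)
  show "digit_set \<omega> F \<theta> \<subseteq> Ord" unfolding digit_set_def by auto
  fix \<beta> assume b: "\<beta> \<in> Ord"
  obtain d \<gamma> where dg: "d \<in> digit_set \<omega> F \<theta>" "\<gamma> \<in> Ord" "\<beta> = d + \<theta> * \<gamma>"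
    using division[OF b] by blast
  show "\<exists>!d. d \<in> digit_set \<omega> F \<theta> \<and> (\<exists>\<gamma>\<in>Ord. \<beta> - d = \<theta> * \<gamma>)"
  proof (rule ex1I)
    show "d \<in> digit_set \<omega> F \<theta> \<and> (\<exists>\<gamma>\<in>Ord. \<beta> - d = \<theta> * \<gamma>)"
      using dg by auto
  next
    fix d2 assume "d2 \<in> digit_set \<omega> F \<theta> \<and> (\<exists>\<gamma>\<in>Ord. \<beta> - d2 = \<theta> * \<gamma>)"
    then obtain \<gamma>2 f2 f1 where h: "d2 \<in> Ord" "\<gamma>2 \<in> Ord" "\<beta> - d2 = \<theta> * \<gamma>2"
      "f2 \<in> F" "mulmap \<omega> \<theta> f2 = cv d2" "f1 \<in> F" "mulmap \<omega> \<theta> f1 = cv d" "d \<in> Ord"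
      using dg(1) unfolding digit_set_def cv_def by auto
    have e: "d2 - d = \<theta> * (\<gamma> - \<gamma>2)" using h(3) dg(3) by (simp add: algebra_simps)
    have g: "\<gamma> - \<gamma>2 \<in> Ord" using dg(2) h(2) by (rule O_diff)
    have "mulmap \<omega> \<theta> (f2 - f1) = cv d2 - cv d"
      using h linear_diff[OF mulmap_linear] by simp
    also have "\<dots> = mulmap \<omega> \<theta> (cv (\<gamma> - \<gamma>2))"
      using h(1,8) e g th by (simp add: cv_diff[symmetric] cv_mult)
    finally have w: "f2 - f1 = cv (\<gamma> - \<gamma>2)" using inj_mm by (simp add: inj_eq)
    have "cv (\<gamma> - \<gamma>2) = 0"
    proof (rule ccontr)
      assume ne: "cv (\<gamma> - \<gamma>2) \<noteq> 0"
      have "f2 \<in> ((\<lambda>f. f + cv (\<gamma> - \<gamma>2)) ` F)" using w h(6) by (auto intro!: image_eqI[of _ _ f1] simp: algebra_simps)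
      moreover have "f2 \<in> ((\<lambda>f. f + 0) ` F)" using h(4) by simp
      moreover have "(0::real^'n) \<in> Zvecs" by (simp add: Zvecs_def)
      ultimately show False using fd ne cv_in_Zvecs unfolding fundamental_domain_def by blast
    qed
    then have "cv d2 = cv d" using h w by simp
    then show "d2 = d" using h(1,8) cv_inj by blast
  qed
qed

end
end


lemma pCons0_sum: "pCons 0 (sum f A) = (\<Sum>x\<in>A. pCons 0 (f x :: complex poly))"
  by (rule poly_eqI) (simp add: coeff_sum coeff_pCons split: nat.split)

lemma sum_beyond:
  fixes f :: "nat \<Rightarrow> real"
  assumes "\<And>i. i \<ge> N \<Longrightarrow> f i = 0" "N \<le> M"
  shows "sum f {..<M} = sum f {..<N}"
  by (rule sum.mono_neutral_right) (use assms in auto)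

context OB
begin

definition V :: "complex poly \<Rightarrow> real" where
  "V a = (\<Sum>i<Suc (degree a). 2 ^ i * norm (cv (coeff a i)))"

lemma V_eq:
  assumes "\<And>i. i \<ge> N \<Longrightarrow> coeff a i = 0"
  shows "V a = (\<Sum>i<N. 2 ^ i * norm (cv (coeff a i)))"
proof -
  let ?f = "\<lambda>i. 2 ^ i * norm (cv (coeff a i))"
  have z1: "?f i = 0" if "i \<ge> N" for i using assms that by (simp add: cv_zero)
  have z2: "?f i = 0" if "i \<ge> Suc (degree a)" for i using that by (simp add: coeff_eq_0 cv_zero)
  have "sum ?f {..<max N (Suc (degree a))} = sum ?f {..<N}" by (rule sum_beyond[OF z1]) auto
  moreover have "sum ?f {..<max N (Suc (degree a))} = sum ?f {..<Suc (degree a)}" by (rule sum_beyond[OF z2]) auto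
  ultimately show ?thesis unfolding V_def by simp
qed

lemma V_nonneg: "V a \<ge> 0"
  unfolding V_def by (intro sum_nonneg) auto

lemma coeff_le_V: "norm (cv (coeff a i)) \<le> V a"
proof (cases "i \<le> degree a")
  case True
  have "norm (cv (coeff a i)) \<le> 2 ^ i * norm (cv (coeff a i))"
    by (simp add: mult_le_cancel_right1 )
  also have "\<dots> \<le> V a" unfolding V_def
    by (rule member_le_sum[where f="\<lambda>i. 2 ^ i * norm (cv (coeff a i))"]) (use True in auto)
  finally show ?thesis .
next
  case False then show ?thesis using V_nonneg by (simp add: coeff_eq_0 cv_zero)
qed

lemma poly_over_const: "c \<in> Ord \<Longrightarrow> poly_over Ord [:c:]"
  unfolding poly_over_def by (simp add: coeff_pCons O_zero split: nat.split)

lemma poly_over_0: "poly_over Ord 0"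
  unfolding poly_over_def by (simp add: O_zero)

lemma poly_over_add: "poly_over Ord a \<Longrightarrow> poly_over Ord b \<Longrightarrow> poly_over Ord (a + b)"
  unfolding poly_over_def by (simp add: O_add)

lemma poly_over_X: "poly_over Ord a \<Longrightarrow> poly_over Ord (pCons 0 a)"
  unfolding poly_over_def by (simp add: coeff_pCons O_zero split: nat.split)

context
  fixes F :: "(real^'n) set" and q :: "complex poly" and \<mu> r B :: real
  assumes qO: "poly_over Ord q" and ql: "lead_coeff q = 1" and qd: "degree q \<ge> 1"
    and lb: "\<And>x. norm (mulmap \<omega> (poly q 0) x) \<ge> \<mu> * norm x"
    and mu: "\<mu> > 0"
    and fd: "fundamental_domain F"
    and FB: "\<forall>f\<in>F. norm f \<le> B"
    and Fr: "ball 0 r \<subseteq> F" and r: "r > 0"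
    and muG: "2 * (\<Sum>i<degree q. 2 ^ i * Kmul * norm (cv (coeff q (Suc i)))) \<le> \<mu>"
    and muR: "4 * ((\<Sum>i<degree q. 2 ^ i * Kmul * norm (cv (coeff q (Suc i)))) * B + 1) < \<mu> * r"
begin

abbreviation "G \<equiv> (\<Sum>i<degree q. 2 ^ i * Kmul * norm (cv (coeff q (Suc i))))"
abbreviation "DD \<equiv> digit_set \<omega> F (poly q 0)"

lemma thO: "poly q 0 \<in> Ord"
  using qO unfolding poly_over_def by (simp add: poly_0_coeff_0)

lemma B0: "B \<ge> 0"
  using bspec[OF FB, of 0] Fr r centre_in_ball[of "0::real^'n" r] by (metis norm_zero subsetD)

lemma G0: "G \<ge> 0"
  by (intro sum_nonneg mult_nonneg_nonneg Kmul_nonneg) auto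

definition rep :: "complex poly \<Rightarrow> bool" where
  "rep a \<longleftrightarrow> (\<exists>(l::nat) d. (\<forall>j<l. d j \<in> DD) \<and> pcong_over Ord q a (\<Sum>j<l. monom (d j) j))"

lemma rep_digits:
  assumes "\<And>i. coeff a i \<in> DD"
  shows "rep a"
  unfolding rep_def
proof (intro exI conjI)
  show "\<forall>j<Suc (degree a). coeff a j \<in> DD" using assms by auto
  have "(\<Sum>j<Suc (degree a). monom (coeff a j) j) = a"
    using poly_as_sum_of_monoms[of a] by (simp add: lessThan_Suc_atMost)
  then show "pcong_over Ord q a (\<Sum>j<Suc (degree a). monom (coeff a j) j)"
    unfolding pcong_over_def using poly_over_0 by (intro exI[of _ 0]) simp
qed

lemma rep_shift:
  assumes r': "rep a'" and d: "d \<in> DD" and g: "\<gamma> \<in> Ord"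
    and a: "a = [:d:] + smult \<gamma> q + pCons 0 a'"
  shows "rep a"
proof -
  obtain l e c where e: "\<forall>j<l. e j \<in> DD" "poly_over Ord c"
    "a' - (\<Sum>j<l. monom (e j) j) = q * c"
    using r' unfolding rep_def pcong_over_def by blast
  define S where "S = (\<Sum>j<l. monom (e j) j)"
  define d' where "d' j = (if j = 0 then d else e (j - 1))" for j
  have S': "(\<Sum>j<Suc l. monom (d' j) j) = [:d:] + pCons 0 S"
  proof -
    have "(\<Sum>j<Suc l. monom (d' j) j) = monom d 0 + (\<Sum>j<l. monom (e j) (Suc j))"
      by (subst sum.lessThan_Suc_shift) (simp add: d'_def)
    also have "(\<Sum>j<l. monom (e j) (Suc j)) = (\<Sum>j<l. pCons 0 (monom (e j) j))"
      by (simp add: monom_Suc)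
    also have "\<dots> = pCons 0 S" by (simp add: S_def pCons0_sum)
    finally show ?thesis by (simp add: monom_0)
  qed
  have "a - (\<Sum>j<Suc l. monom (d' j) j) = smult \<gamma> q + (pCons 0 a' - pCons 0 S)"
    using a S' by (simp add: algebra_simps)
  also have "pCons 0 a' - pCons 0 S = pCons 0 (a' - S)" by simp
  also have "\<dots> = pCons 0 (q * c)" using e(3) by (simp add: S_def)
  also have "smult \<gamma> q + pCons 0 (q * c) = q * ([:\<gamma>:] + pCons 0 c)"
    by (simp add: distrib_left mult_pCons_right)
  finally have "pcong_over Ord q a (\<Sum>j<Suc l. monom (d' j) j)"
    unfolding pcong_over_def using poly_over_add[OF poly_over_const[OF g] poly_over_X[OF e(2)]] by blast
  moreover have "\<forall>j<Suc l. d' j \<in> DD" using e(1) d by (auto simp: d'_def)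
  ultimately show ?thesis unfolding rep_def by blast
qed


lemmas division' = division[OF thO lb mu fd FB Fr r]
lemmas small_in_D' = small_in_D[OF thO lb mu fd FB Fr r]

lemma step:
  assumes aO: "poly_over Ord a"
  shows "\<exists>d \<gamma> a'. d \<in> DD \<and> \<gamma> \<in> Ord \<and> poly_over Ord a' \<and> a = [:d:] + smult \<gamma> q + pCons 0 a'
           \<and> V a' \<le> V a / 2 + G * B"
proof -
  have a0O: "coeff a 0 \<in> Ord" using aO unfolding poly_over_def by auto
  obtain d \<gamma> where dg: "d \<in> DD" "\<gamma> \<in> Ord" "coeff a 0 = d + poly q 0 * \<gamma>"
    "norm (cv \<gamma>) \<le> norm (cv (coeff a 0)) / \<mu> + B"
    using division'[OF a0O] by blast
  define b where "b = a - [:d:] - smult \<gamma> q"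
  obtain c0 a' where ba: "b = pCons c0 a'" by (rule pCons_cases)
  have "c0 = coeff b 0" using ba by simp
  also have "\<dots> = 0" using dg(3) by (simp add: b_def poly_0_coeff_0 algebra_simps)
  finally have c0: "c0 = 0" .
  have aeq: "a = [:d:] + smult \<gamma> q + pCons 0 a'"
    using ba c0 unfolding b_def by (simp add: algebra_simps)
  have ca': "coeff a' i = coeff a (Suc i) - \<gamma> * coeff q (Suc i)" for i
  proof -
    have "coeff a' i = coeff b (Suc i)" using ba by simp
    then show ?thesis by (simp add: b_def)
  qed
  have cq: "coeff q (Suc i) \<in> Ord" "coeff a (Suc i) \<in> Ord" for i
    using qO aO unfolding poly_over_def by auto
  have a'O: "poly_over Ord a'"
    unfolding poly_over_def ca' using cq dg(2) by (auto intro: O_diff O_mult)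
  define N where "N = max (degree a) (degree q)"
  have z: "coeff a' i = 0" if "i \<ge> N" for i
    using that by (simp add: ca' N_def coeff_eq_0)
  define A where "A = (\<Sum>i<N. 2 ^ i * norm (cv (coeff a (Suc i))))"
  have "V a' = (\<Sum>i<N. 2 ^ i * norm (cv (coeff a' i)))" by (rule V_eq[OF z])
  also have "\<dots> \<le> (\<Sum>i<N. 2 ^ i * norm (cv (coeff a (Suc i))) + norm (cv \<gamma>) * (2 ^ i * Kmul * norm (cv (coeff q (Suc i)))))"
  proof (rule sum_mono)
    fix i
    have "cv (coeff a' i) = cv (coeff a (Suc i)) - cv (\<gamma> * coeff q (Suc i))"
      unfolding ca' using cq dg(2) by (intro cv_diff O_mult) auto
    then have "norm (cv (coeff a' i)) \<le> norm (cv (coeff a (Suc i))) + norm (cv (\<gamma> * coeff q (Suc i)))"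
      by (simp add: norm_triangle_ineq4)
    also have "\<dots> \<le> norm (cv (coeff a (Suc i))) + norm (cv \<gamma>) * norm (cv (coeff q (Suc i))) * Kmul"
      using norm_cv_mult[OF dg(2) cq(1)] by simp
    finally have "norm (cv (coeff a' i)) \<le> norm (cv (coeff a (Suc i))) + norm (cv \<gamma>) * norm (cv (coeff q (Suc i))) * Kmul" .
    then have "2 ^ i * norm (cv (coeff a' i)) \<le> 2 ^ i * (norm (cv (coeff a (Suc i))) + norm (cv \<gamma>) * norm (cv (coeff q (Suc i))) * Kmul)"
      by (intro mult_left_mono) auto
    then show "2 ^ i * norm (cv (coeff a' i)) \<le> 2 ^ i * norm (cv (coeff a (Suc i))) + norm (cv \<gamma>) * (2 ^ i * Kmul * norm (cv (coeff q (Suc i))))"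
      by (simp add: algebra_simps)
  qed
  also have "\<dots> = A + norm (cv \<gamma>) * (\<Sum>i<N. 2 ^ i * Kmul * norm (cv (coeff q (Suc i))))"
    by (simp add: A_def sum.distrib sum_distrib_left)
  also have "(\<Sum>i<N. 2 ^ i * Kmul * norm (cv (coeff q (Suc i)))) = G"
    by (rule sum_beyond) (auto simp: N_def coeff_eq_0 cv_zero)
  finally have Va': "V a' \<le> A + norm (cv \<gamma>) * G" .
  have "V a = (\<Sum>i<Suc N. 2 ^ i * norm (cv (coeff a i)))"
    by (rule V_eq) (auto simp: N_def coeff_eq_0)
  also have "\<dots> = norm (cv (coeff a 0)) + 2 * A"
    by (subst sum.lessThan_Suc_shift) (simp add: A_def sum_distrib_left mult.assoc)
  finally have Va: "V a = norm (cv (coeff a 0)) + 2 * A" .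
  let ?x = "norm (cv (coeff a 0))"
  have "norm (cv \<gamma>) * G \<le> (?x / \<mu> + B) * G" using dg(4) G0 by (rule mult_right_mono)
  also have "\<dots> = ?x / \<mu> * G + G * B" by (simp add: algebra_simps)
  also have "?x / \<mu> * G \<le> ?x / \<mu> * (\<mu> / 2)" using muG mu by (intro mult_left_mono) auto
  also have "?x / \<mu> * (\<mu> / 2) = ?x / 2" using mu by simp
  finally have "norm (cv \<gamma>) * G \<le> ?x / 2 + G * B" by simp
  with Va' Va have "V a' \<le> V a / 2 + G * B" by linarith
  then show ?thesis using dg(1,2) a'O aeq by blast
qed

lemma rep_all: "poly_over Ord a \<Longrightarrow> rep a"
proof (induction "nat \<lfloor>V a\<rfloor>" arbitrary: a rule: less_induct)
  case less
  show ?case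
  proof (cases "V a < 4 * (G * B + 1)")
    case True
    show ?thesis
    proof (rule rep_digits)
      fix i
      have "coeff a i \<in> Ord" using less.prems unfolding poly_over_def by auto
      moreover have "norm (cv (coeff a i)) < \<mu> * r"
        using coeff_le_V[of a i] True muR by linarith
      ultimately show "coeff a i \<in> DD" by (rule small_in_D')
    qed
  next
    case False
    obtain d \<gamma> a' where s: "d \<in> DD" "\<gamma> \<in> Ord" "poly_over Ord a'" "a = [:d:] + smult \<gamma> q + pCons 0 a'"
      "V a' \<le> V a / 2 + G * B" using step[OF less.prems] by blast
    have GB: "G * B \<ge> 0" using G0 B0 by simp
    have "V a \<ge> 4 * (G * B) + 4" using False by (simp add: algebra_simps)
    then have "V a' \<le> V a - 1" using s(5) GB by linarith
    then have "\<lfloor>V a'\<rfloor> \<le> \<lfloor>V a\<rfloor> - 1" by linarith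
    moreover have "\<lfloor>V a'\<rfloor> \<ge> 0" using V_nonneg by simp
    ultimately have "nat \<lfloor>V a'\<rfloor> < nat \<lfloor>V a\<rfloor>" by linarith
    then have "rep a'" using less.hyps s(3) by blast
    then show ?thesis using rep_shift s by blast
  qed
qed

lemma finiteness: "finiteness_property \<omega> q DD"
  unfolding finiteness_property_def
proof (intro conjI allI impI)
  show "lead_coeff q = 1" by (rule ql)
  show "poly_over Ord q" by (rule qO)
  show "complete_residue_system Ord (poly q 0) DD" by (rule crs[OF thO lb mu fd FB Fr r])
  show "0 \<in> DD" by (rule zero_in_D[OF thO lb mu fd FB Fr r])
  fix a assume "poly_over Ord a"
  then show "\<exists>(l::nat) d. (\<forall>j<l. d j \<in> DD) \<and> pcong_over Ord q a (\<Sum>j<l. monom (d j) j)"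
    using rep_all unfolding rep_def by blast
qed

end
end


context OB
begin

lemma plus_case:
  fixes p :: "complex poly" and F :: "(real^'n) set" and B r L :: real and m :: "'n \<Rightarrow> int"
  assumes pl: "lead_coeff p = 1" and pd: "degree p \<ge> 1" and pO: "poly_over Ord p"
    and fd: "fundamental_domain F" and FB: "\<forall>f\<in>F. norm f \<le> B"
    and Fr: "ball 0 r \<subseteq> F" and r: "r > 0"
    and LP: "4 * ((\<Sum>i\<in>UNIV. \<bar>real_of_int (ocoord \<omega> (poly p 0) i)\<bar>) * (1 + Kmul)) + 4 * (real CARD('n) * Kmul)
              + 4 * (\<Sum>i<degree p. 2 ^ i * Kmul * norm (cv (coeff p (Suc i))))
              + 8 * ((\<Sum>i<degree p. 2 ^ i * Kmul * norm (cv (coeff p (Suc i)))) * B + 1) / r + 1 \<le> L"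
    and HM: "L < \<bar>real_of_int (m i0)\<bar>"
    and mj: "\<And>j. j \<noteq> i0 \<Longrightarrow> \<bar>real_of_int (m j)\<bar> < \<bar>real_of_int (m i0)\<bar> / L"
  shows "finiteness_property \<omega> (p + [:\<Sum>j\<in>UNIV. of_int (m j) * \<omega> j:])
           (digit_set \<omega> F (poly p 0 + (\<Sum>j\<in>UNIV. of_int (m j) * \<omega> j)))"
proof -
  define \<alpha> where "\<alpha> = (\<Sum>j\<in>UNIV. of_int (m j) * \<omega> j)"
  define q where "q = p + [:\<alpha>:]"
  define p0 where "p0 = poly p 0"
  define P where "P = (\<Sum>i\<in>UNIV. \<bar>real_of_int (ocoord \<omega> p0 i)\<bar>)"
  define G where "G = (\<Sum>i<degree p. 2 ^ i * Kmul * norm (cv (coeff p (Suc i))))"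
  define K where "K = G * B + 1"
  define k where "k = real CARD('n)"
  define M where "M = \<bar>real_of_int (m i0)\<bar>"
  have LP': "4 * (P * (1 + Kmul)) + 4 * (k * Kmul) + 4 * G + 8 * K / r + 1 \<le> L"
    using LP unfolding P_def G_def K_def k_def p0_def .
  have P0: "P \<ge> 0" unfolding P_def by (intro sum_nonneg) auto
  have K0: "K \<ge> 0"
  proof -
    have "B \<ge> 0" using bspec[OF FB, of 0] Fr r centre_in_ball[of "0::real^'n" r] by (metis norm_zero subsetD)
    moreover have "G \<ge> 0" unfolding G_def by (intro sum_nonneg mult_nonneg_nonneg Kmul_nonneg) auto
    ultimately show ?thesis unfolding K_def by simp
  qed
  have k0: "k \<ge> 0" unfolding k_def by simp
  have t1: "0 \<le> 4 * (P * (1 + Kmul))" using P0 Kmul_nonneg by simp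
  have t2: "0 \<le> 4 * (k * Kmul)" using k0 Kmul_nonneg by simp
  have t3: "0 \<le> 8 * K / r" using K0 r by simp
  have G0: "G \<ge> 0" unfolding G_def by (intro sum_nonneg mult_nonneg_nonneg Kmul_nonneg) auto
  have L1: "L \<ge> 1" using LP' t1 t2 t3 G0 by linarith
  have HM': "L < M" using HM unfolding M_def .
  have p0O: "p0 \<in> Ord" using pO unfolding poly_over_def p0_def by (simp add: poly_0_coeff_0)
  have aO: "\<alpha> \<in> Ord" unfolding \<alpha>_def by (rule O_I)
  have dq: "degree q = degree p" unfolding q_def using pd by (subst degree_add_eq_left) auto
  have cq: "coeff q (Suc i) = coeff p (Suc i)" for i unfolding q_def by simp
  have ql: "lead_coeff q = 1"
  proof -
    obtain k0 where k: "degree p = Suc k0" using pd by (cases "degree p") auto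
    show ?thesis using pl dq cq[of k0] k by simp
  qed
  have qO: "poly_over Ord q" using pO aO unfolding q_def poly_over_def
    by (auto simp: coeff_pCons O_add split: nat.split)
  have q0: "poly q 0 = p0 + \<alpha>" unfolding q_def p0_def by simp
  have thO: "p0 + \<alpha> \<in> Ord" using p0O aO by (rule O_add)
  have tc: "ocoord \<omega> (p0 + \<alpha>) i = ocoord \<omega> p0 i + m i" for i
    using ocoord_add[OF p0O aO] unfolding \<alpha>_def by (simp add: ocoord_lc)
  have h1: "\<bar>real_of_int (ocoord \<omega> (p0 + \<alpha>) i0)\<bar> \<ge> M - P"
  proof -
    have "\<bar>real_of_int (ocoord \<omega> p0 i0)\<bar> \<le> P" unfolding P_def
      by (rule member_le_sum[where f="\<lambda>i. \<bar>real_of_int (ocoord \<omega> p0 i)\<bar>"]) auto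
    then show ?thesis unfolding tc M_def by linarith
  qed
  have h2: "(\<Sum>i\<in>-{i0}. \<bar>real_of_int (ocoord \<omega> (p0 + \<alpha>) i)\<bar>) \<le> P + k * (M / L)"
  proof -
    have "(\<Sum>i\<in>-{i0}. \<bar>real_of_int (ocoord \<omega> (p0 + \<alpha>) i)\<bar>) \<le> (\<Sum>i\<in>-{i0}. \<bar>real_of_int (ocoord \<omega> p0 i)\<bar> + M / L)"
    proof (rule sum_mono)
      fix i assume "i \<in> -{i0}"
      then have "\<bar>real_of_int (m i)\<bar> \<le> M / L" using mj[of i] unfolding M_def by auto
      then show "\<bar>real_of_int (ocoord \<omega> (p0 + \<alpha>) i)\<bar> \<le> \<bar>real_of_int (ocoord \<omega> p0 i)\<bar> + M / L"
        unfolding tc by linarith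
    qed
    also have "\<dots> = (\<Sum>i\<in>-{i0}. \<bar>real_of_int (ocoord \<omega> p0 i)\<bar>) + real (card (-{i0::'n})) * (M / L)"
      by (simp add: sum.distrib)
    also have "(\<Sum>i\<in>-{i0}. \<bar>real_of_int (ocoord \<omega> p0 i)\<bar>) \<le> P"
      unfolding P_def by (rule sum_mono2) auto
    also have "real (card (-{i0::'n})) * (M / L) \<le> k * (M / L)"
      unfolding k_def using HM' L1 by (intro mult_right_mono) (auto intro: card_mono)
    finally show ?thesis by simp
  qed
  have h3: "k * (M / L) * Kmul \<le> M / 4"
  proof -
    have "k * Kmul \<le> L / 4" using LP' t1 t3 G0 by linarith
    then have "(k * Kmul) * (M / L) \<le> (L / 4) * (M / L)" using HM' L1 by (intro mult_right_mono) auto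
    also have "\<dots> = M / 4" using L1 by simp
    finally show ?thesis by (simp add: algebra_simps)
  qed
  have h4: "P + P * Kmul \<le> M / 4"
    using LP' t2 t3 G0 HM' by (simp add: algebra_simps)
  have lb: "norm (mulmap \<omega> (poly q 0) x) \<ge> (M / 2) * norm x" for x
  proof -
    have "norm (mulmap \<omega> (p0 + \<alpha>) x) \<ge> \<bar>real_of_int (ocoord \<omega> (p0 + \<alpha>) i0)\<bar> * norm x
            - (\<Sum>i\<in>-{i0}. \<bar>real_of_int (ocoord \<omega> (p0 + \<alpha>) i)\<bar>) * norm x * Kmul"
      by (rule mulmap_lower[OF thO])
    moreover have "\<bar>real_of_int (ocoord \<omega> (p0 + \<alpha>) i0)\<bar> * norm x \<ge> (M - P) * norm x"
      using h1 by (intro mult_right_mono) auto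
    moreover have "(\<Sum>i\<in>-{i0}. \<bar>real_of_int (ocoord \<omega> (p0 + \<alpha>) i)\<bar>) * norm x * Kmul \<le> (P + k * (M / L)) * norm x * Kmul"
      using h2 Kmul_nonneg by (intro mult_right_mono) auto
    moreover have "(M - P) * norm x - (P + k * (M / L)) * norm x * Kmul = (M - P - P * Kmul - k * (M / L) * Kmul) * norm x"
      by (simp add: algebra_simps)
    moreover have "(M - P - P * Kmul - k * (M / L) * Kmul) * norm x \<ge> (M / 2) * norm x"
      using h3 h4 by (intro mult_right_mono) auto
    ultimately show ?thesis unfolding q0 by linarith
  qed
  have mu: "M / 2 > 0" using HM' L1 by simp
  have muG: "2 * (\<Sum>i<degree q. 2 ^ i * Kmul * norm (cv (coeff q (Suc i)))) \<le> M / 2"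
    unfolding dq cq G_def[symmetric] using LP' t1 t2 t3 HM' by linarith
  have muR: "4 * ((\<Sum>i<degree q. 2 ^ i * Kmul * norm (cv (coeff q (Suc i)))) * B + 1) < M / 2 * r"
  proof -
    have "8 * K / r < M" using LP' t1 t2 G0 HM' by linarith
    then have "8 * K < M * r" using r by (simp add: divide_less_eq)
    then show ?thesis unfolding dq cq G_def[symmetric] K_def[symmetric] by simp
  qed
  have "finiteness_property \<omega> q (digit_set \<omega> F (poly q 0))"
    by (rule finiteness[OF qO ql _ lb mu fd FB Fr r muG muR]) (subst dq, rule pd)
  then show ?thesis unfolding q_def q0 \<alpha>_def p0_def by simp
qed

lemma main_OB:
  fixes p :: "complex poly" and F :: "(real^'n) set"
  assumes "lead_coeff p = 1" and "degree p \<ge> 1" and "poly_over (order_of \<omega>) p"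
    and "bounded F" and "fundamental_domain F" and "0 \<in> interior F"
  shows "\<exists>\<eta>>0. \<forall>m::'n \<Rightarrow> int.
           (1 < \<eta> * \<bar>real_of_int (m i0)\<bar> \<and>
            (\<forall>j. j \<noteq> i0 \<longrightarrow> \<bar>real_of_int (m j)\<bar> < \<eta> * \<bar>real_of_int (m i0)\<bar>)) \<longrightarrow>
           (let \<alpha> = (\<Sum>j\<in>UNIV. of_int (m j) * \<omega> j) in
              finiteness_property \<omega> (p + [:\<alpha>:]) (digit_set \<omega> F (poly p 0 + \<alpha>)) \<and>
              finiteness_property \<omega> (p - [:\<alpha>:]) (digit_set \<omega> F (poly p 0 - \<alpha>)))"
proof -
  obtain B where FB: "\<forall>f\<in>F. norm f \<le> B" using assms(4) unfolding bounded_iff by blast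
  obtain r where r: "r > 0" "ball 0 r \<subseteq> F" using assms(6) unfolding mem_interior by blast
  define L where "L = 4 * ((\<Sum>i\<in>UNIV. \<bar>real_of_int (ocoord \<omega> (poly p 0) i)\<bar>) * (1 + Kmul)) + 4 * (real CARD('n) * Kmul)
              + 4 * (\<Sum>i<degree p. 2 ^ i * Kmul * norm (cv (coeff p (Suc i))))
              + 8 * ((\<Sum>i<degree p. 2 ^ i * Kmul * norm (cv (coeff p (Suc i)))) * B + 1) / r + 1"
  have B0: "B \<ge> 0" using bspec[OF FB, of 0] r centre_in_ball[of "0::real^'n" r] by (metis norm_zero subsetD)
  have L0: "L \<ge> 1" unfolding L_def using B0 r Kmul_nonneg
    by (intro add_increasing order.refl mult_nonneg_nonneg sum_nonneg divide_nonneg_pos add_nonneg_nonneg) auto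
  show ?thesis
  proof (intro exI[of _ "1 / L"] conjI allI impI)
    show "1 / L > 0" using L0 by simp
    fix m :: "'n \<Rightarrow> int"
    assume c: "1 < 1 / L * \<bar>real_of_int (m i0)\<bar> \<and>
            (\<forall>j. j \<noteq> i0 \<longrightarrow> \<bar>real_of_int (m j)\<bar> < 1 / L * \<bar>real_of_int (m i0)\<bar>)"
    have HM: "L < \<bar>real_of_int (m i0)\<bar>" using c L0 by (simp add: field_simps)
    have mj: "\<bar>real_of_int (m j)\<bar> < \<bar>real_of_int (m i0)\<bar> / L" if "j \<noteq> i0" for j
      using c that by simp
    have HM2: "L < \<bar>real_of_int ((-m) i0)\<bar>" using HM by simp
    have mj2: "\<bar>real_of_int ((-m) j)\<bar> < \<bar>real_of_int ((-m) i0)\<bar> / L" if "j \<noteq> i0" for j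
      using mj[OF that] by simp
    have A: "finiteness_property \<omega> (p + [:\<Sum>j\<in>UNIV. of_int (m j) * \<omega> j:])
           (digit_set \<omega> F (poly p 0 + (\<Sum>j\<in>UNIV. of_int (m j) * \<omega> j)))"
      by (rule plus_case[where m=m and L=L, OF assms(1-3,5) FB r(2,1) _ HM]) (simp add: L_def, erule mj)
    have Bm: "finiteness_property \<omega> (p + [:\<Sum>j\<in>UNIV. of_int ((-m) j) * \<omega> j:])
           (digit_set \<omega> F (poly p 0 + (\<Sum>j\<in>UNIV. of_int ((-m) j) * \<omega> j)))"
      by (rule plus_case[where m="-m" and L=L, OF assms(1-3,5) FB r(2,1) _ HM2]) (simp add: L_def, erule mj2)
    have neg: "(\<Sum>j\<in>UNIV. of_int ((-m) j) * \<omega> j) = - (\<Sum>j\<in>UNIV. of_int (m j) * \<omega> j)"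
      by (simp add: sum_negf)
    have E: "p - [:\<Sum>j\<in>UNIV. of_int (m j) * \<omega> j:] = p + [:- (\<Sum>j\<in>UNIV. of_int (m j) * \<omega> j):]"
      by simp
    have E2: "poly p 0 - (\<Sum>j\<in>UNIV. of_int (m j) * \<omega> j) = poly p 0 + - (\<Sum>j\<in>UNIV. of_int (m j) * \<omega> j)"
      by simp
    show "let \<alpha> = (\<Sum>j\<in>UNIV. of_int (m j) * \<omega> j) in
              finiteness_property \<omega> (p + [:\<alpha>:]) (digit_set \<omega> F (poly p 0 + \<alpha>)) \<and>
              finiteness_property \<omega> (p - [:\<alpha>:]) (digit_set \<omega> F (poly p 0 - \<alpha>))"
      unfolding Let_def E E2 using A Bm[unfolded neg] by blast
  qed
qed

end

theorem mainTheorem10: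
  fixes \<omega> :: "'n::finite \<Rightarrow> complex" and i0 :: 'n
    and p :: "complex poly" and F :: "(real^'n) set"
  assumes "is_order_basis \<omega>" and "\<omega> i0 = 1"
    and "lead_coeff p = 1" and "degree p \<ge> 1" and "poly_over (order_of \<omega>) p"
    and "bounded F" and "fundamental_domain F" and "0 \<in> interior F"
  shows "\<exists>\<eta>>0. \<forall>m::'n \<Rightarrow> int.
           (1 < \<eta> * \<bar>real_of_int (m i0)\<bar> \<and>
            (\<forall>j. j \<noteq> i0 \<longrightarrow> \<bar>real_of_int (m j)\<bar> < \<eta> * \<bar>real_of_int (m i0)\<bar>)) \<longrightarrow>
           (let \<alpha> = (\<Sum>j\<in>UNIV. of_int (m j) * \<omega> j) in
              finiteness_property \<omega> (p + [:\<alpha>:]) (digit_set \<omega> F (poly p 0 + \<alpha>)) \<and>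
              finiteness_property \<omega> (p - [:\<alpha>:]) (digit_set \<omega> F (poly p 0 - \<alpha>)))"
proof -
  interpret OB \<omega> i0 by unfold_locales (rule assms(1), rule assms(2))
  show ?thesis by (rule main_OB[OF assms(3-8)])
qed

end
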